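(* For every bipartite state $\rho_{AB}$ that is PPT across $A:B$, $S^\downarrow_\infty(A|B)_\rho\ge0$.
   Context: $\log$ base 2; all systems finite-dimensional. $D_\infty(\rho\|\sigma):=\log\inf\{\lambda\ge0:\rho\le\lambda\sigma\}$; $S^\downarrow_\infty(A|B)_\rho:=-D_\infty(\rho_{AB}\|\mathbb 1_A\otimes\rho_B)$ with $\rho_B=\operatorname{tr}_A\rho_{AB}$. A state is PPT across $A:B$ if its partial transpose on $B$ is positive semidefinite. *)

theory Defs
  imports "HOL-Analysis.Analysis"
begin

text \<open>Operators on a finite-dimensional Hilbert space with orthonormal basis indexed by a
finite type 'i are represented by their matrices 'i => 'i => complex.
A bipartite system A:B has basis index type 'a * 'b.\<close>

type_synonym 'i op = "'i \<Rightarrow> 'i \<Rightarrow> complex"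

definition qform :: "('i::finite) op \<Rightarrow> ('i \<Rightarrow> complex) \<Rightarrow> complex" where
  "qform M v = (\<Sum>i\<in>UNIV. \<Sum>j\<in>UNIV. cnj (v i) * M i j * v j)"

definition psd :: "('i::finite) op \<Rightarrow> bool" where
  "psd M \<longleftrightarrow> (\<forall>v. Im (qform M v) = 0 \<and> Re (qform M v) \<ge> 0)"

definition loewner_le :: "('i::finite) op \<Rightarrow> 'i op \<Rightarrow> bool" where
  "loewner_le X Y \<longleftrightarrow> psd (\<lambda>i j. Y i j - X i j)"

definition trace :: "('i::finite) op \<Rightarrow> complex" where
  "trace M = (\<Sum>i\<in>UNIV. M i i)"

definition density_op :: "('i::finite) op \<Rightarrow> bool" where
  "density_op \<rho> \<longleftrightarrow> psd \<rho> \<and> trace \<rho> = 1"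

definition ptransB :: "('a::finite \<times> 'b::finite) op \<Rightarrow> ('a \<times> 'b) op" where
  "ptransB \<rho> = (\<lambda>(a, b) (a', b'). \<rho> (a, b') (a', b))"

definition PPT :: "('a::finite \<times> 'b::finite) op \<Rightarrow> bool" where
  "PPT \<rho> \<longleftrightarrow> psd (ptransB \<rho>)"

definition ptraceA :: "('a::finite \<times> 'b::finite) op \<Rightarrow> 'b op" where
  "ptraceA \<rho> = (\<lambda>b b'. \<Sum>a\<in>UNIV. \<rho> (a, b) (a, b'))"

definition idA_tensor :: "'b::finite op \<Rightarrow> ('a::finite \<times> 'b) op" where
  "idA_tensor \<sigma> = (\<lambda>(a, b) (a', b'). if a = a' then \<sigma> b b' else 0)"

text \<open>Max-relative entropy D_infty(rho||sigma) = log2 inf {lambda >= 0. rho <= lambda sigma},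
with values in the extended reals (inf of the empty set = +infinity, log 0 = -infinity).\<close>
definition D_max :: "('i::finite) op \<Rightarrow> 'i op \<Rightarrow> ereal" where
  "D_max \<rho> \<sigma> =
    (let L = {t::real. t \<ge> 0 \<and> loewner_le \<rho> (\<lambda>i j. complex_of_real t * \<sigma> i j)} in
     if L = {} then \<infinity> else if Inf L = 0 then -\<infinity> else ereal (log 2 (Inf L)))"

definition S_down_inf :: "('a::finite \<times> 'b::finite) op \<Rightarrow> ereal" where
  "S_down_inf \<rho> = - D_max \<rho> (idA_tensor (ptraceA \<rho>))"

end

theory Submission
  imports Defs
begin

definition bil :: "('i::finite) op \<Rightarrow> ('i \<Rightarrow> complex) \<Rightarrow> ('i \<Rightarrow> complex) \<Rightarrow> complex" where
  "bil M f g = (\<Sum>i\<in>UNIV. \<Sum>j\<in>UNIV. cnj (f i) * M i j * g j)"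
lemma sum_UNIV_prod: "(\<Sum>p\<in>(UNIV::('a::finite \<times> 'b::finite) set). f p) = (\<Sum>x\<in>UNIV. \<Sum>y\<in>UNIV. f (x,y))"
  by (subst sum.cartesian_product) simp
lemma sum_if_const: "(\<Sum>y\<in>A. if P then H y else 0) = (if P then (\<Sum>y\<in>A. H y) else 0)"
  by simp
lemma bil_delta:
  fixes \<rho> :: "('a::finite \<times> 'b::finite) op"
  shows "bil (ptransB \<rho>) (\<lambda>(x,y). if x = p then u y else 0) (\<lambda>(x,y). if x = q then u' y else 0)
     = (\<Sum>y\<in>UNIV. \<Sum>y'\<in>UNIV. cnj (u y) * \<rho> (p,y') (q,y) * u' y')"
proof -
  have e: "\<And>x y x' y'. cnj (if x = p then u y else 0) * \<rho> (x,y') (x',y) * (if x' = q then u' y' else 0)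
     = (if x = p then (if x' = q then cnj (u y) * \<rho> (p,y') (q,y) * u' y' else 0) else 0)"
    by auto
  have "bil (ptransB \<rho>) (\<lambda>(x,y). if x = p then u y else 0) (\<lambda>(x,y). if x = q then u' y else 0)
     = (\<Sum>x\<in>UNIV. \<Sum>y\<in>UNIV. \<Sum>x'\<in>UNIV. \<Sum>y'\<in>UNIV.
          cnj (if x = p then u y else 0) * \<rho> (x,y') (x',y) * (if x' = q then u' y' else 0))"
    unfolding bil_def sum_UNIV_prod ptransB_def by (simp only: prod.case)
  also have "\<dots> = (\<Sum>y\<in>UNIV. \<Sum>y'\<in>UNIV. cnj (u y) * \<rho> (p,y') (q,y) * u' y')"
    by (simp only: e sum_if_const sum.delta[OF finite] UNIV_I if_True)
  finally show ?thesis .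
qed

lemma qform_bil: "qform M v = bil M v v"
  by (simp add: qform_def bil_def)

lemma bil_diff: "bil M (\<lambda>i. f i - g i) (\<lambda>i. h i - k i) =
   bil M f h - bil M f k - bil M g h + bil M g k"
  by (simp add: bil_def algebra_simps sum_subtractf sum.distrib)

lemma swap3: "(\<Sum>c\<in>A. \<Sum>y\<in>B. \<Sum>y'\<in>C. G c y y') = (\<Sum>y'\<in>C. \<Sum>y\<in>B. \<Sum>c\<in>A. G c y y')"
proof -
  have "(\<Sum>c\<in>A. \<Sum>y\<in>B. \<Sum>y'\<in>C. G c y y') = (\<Sum>c\<in>A. \<Sum>y'\<in>C. \<Sum>y\<in>B. G c y y')"
    by (rule sum.cong[OF refl], rule sum.swap)
  also have "\<dots> = (\<Sum>y'\<in>C. \<Sum>c\<in>A. \<Sum>y\<in>B. G c y y')" by (rule sum.swap)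
  also have "\<dots> = (\<Sum>y'\<in>C. \<Sum>y\<in>B. \<Sum>c\<in>A. G c y y')"
    by (rule sum.cong[OF refl], rule sum.swap)
  finally show ?thesis .
qed

lemma rot3: "(\<Sum>a\<in>A. \<Sum>y\<in>B. \<Sum>y'\<in>C. G a y y') = (\<Sum>y'\<in>C. \<Sum>a\<in>A. \<Sum>y\<in>B. G a y y')"
proof -
  have "(\<Sum>a\<in>A. \<Sum>y\<in>B. \<Sum>y'\<in>C. G a y y') = (\<Sum>a\<in>A. \<Sum>y'\<in>C. \<Sum>y\<in>B. G a y y')"
    by (rule sum.cong[OF refl], rule sum.swap)
  also have "\<dots> = (\<Sum>y'\<in>C. \<Sum>a\<in>A. \<Sum>y\<in>B. G a y y')" by (rule sum.swap)
  finally show ?thesis .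
qed

lemma key_identity:
  fixes \<rho> :: "('a::finite \<times> 'b::finite) op" and v :: "'a \<times> 'b \<Rightarrow> complex"
  defines "f \<equiv> \<lambda>a c. (\<lambda>(x,y). if x = c then cnj (v (a,y)) else 0)"
    and "g \<equiv> \<lambda>a c. (\<lambda>(x,y). if x = a then cnj (v (c,y)) else 0)"
  shows "(\<Sum>a\<in>UNIV. \<Sum>c\<in>UNIV. qform (ptransB \<rho>) (\<lambda>i. f a c i - g a c i))
     = 2 * qform (\<lambda>i j. idA_tensor (ptraceA \<rho>) i j - \<rho> i j) v"
proof -
  define S1 where "S1 = (\<Sum>a\<in>UNIV. \<Sum>c\<in>UNIV. \<Sum>y\<in>UNIV. \<Sum>y'\<in>UNIV. v (a,y) * \<rho> (c,y') (c,y) * cnj (v (a,y')))"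
  define S4 where "S4 = (\<Sum>a\<in>UNIV. \<Sum>c\<in>UNIV. \<Sum>y\<in>UNIV. \<Sum>y'\<in>UNIV. v (c,y) * \<rho> (a,y') (a,y) * cnj (v (c,y')))"
  define S2 where "S2 = (\<Sum>a\<in>UNIV. \<Sum>c\<in>UNIV. \<Sum>y\<in>UNIV. \<Sum>y'\<in>UNIV. v (a,y) * \<rho> (c,y') (a,y) * cnj (v (c,y')))"
  define S3 where "S3 = (\<Sum>a\<in>UNIV. \<Sum>c\<in>UNIV. \<Sum>y\<in>UNIV. \<Sum>y'\<in>UNIV. v (c,y) * \<rho> (a,y') (c,y) * cnj (v (a,y')))"
  have E0: "(\<Sum>a\<in>UNIV. \<Sum>c\<in>UNIV. qform (ptransB \<rho>) (\<lambda>i. f a c i - g a c i)) = S1 - S2 - S3 + S4"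
    unfolding qform_bil bil_diff f_def g_def bil_delta S1_def S2_def S3_def S4_def
    by (simp add: sum_subtractf sum.distrib mult.commute)
  have E1: "S4 = S1" unfolding S1_def S4_def by (rule sum.swap)
  have E2: "S3 = S2" unfolding S3_def S2_def by (rule sum.swap)
  have E3: "S1 - S2 = qform (\<lambda>i j. idA_tensor (ptraceA \<rho>) i j - \<rho> i j) v"
  proof -
    have e: "\<And>a b a' b'. cnj (v (a,b)) * (if a = a' then ptraceA \<rho> b b' else 0) * v (a',b')
        = (if a = a' then cnj (v (a,b)) * ptraceA \<rho> b b' * v (a,b') else 0)" by simp
    have R1: "(\<Sum>a\<in>UNIV. \<Sum>b\<in>UNIV. \<Sum>a'\<in>UNIV. \<Sum>b'\<in>UNIV. cnj (v (a,b)) * (if a = a' then ptraceA \<rho> b b' else 0) * v (a',b'))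
       = (\<Sum>a\<in>UNIV. \<Sum>b\<in>UNIV. \<Sum>b'\<in>UNIV. cnj (v (a,b)) * ptraceA \<rho> b b' * v (a,b'))"
      by (simp only: e sum_if_const sum.delta[OF finite] sum.delta'[OF finite] UNIV_I if_True)
    have R2: "\<dots> = (\<Sum>a\<in>UNIV. \<Sum>b\<in>UNIV. \<Sum>b'\<in>UNIV. \<Sum>c\<in>UNIV. cnj (v (a,b)) * \<rho> (c,b) (c,b') * v (a,b'))"
      by (simp add: ptraceA_def sum_distrib_left sum_distrib_right)
    have R3: "S1 = (\<Sum>a\<in>UNIV. \<Sum>b\<in>UNIV. \<Sum>b'\<in>UNIV. \<Sum>c\<in>UNIV. cnj (v (a,b)) * \<rho> (c,b) (c,b') * v (a,b'))"
      unfolding S1_def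
      by (rule sum.cong[OF refl], subst swap3, simp add: mult_ac)
    have T1: "S1 = (\<Sum>a\<in>UNIV. \<Sum>b\<in>UNIV. \<Sum>a'\<in>UNIV. \<Sum>b'\<in>UNIV. cnj (v (a,b)) * (if a = a' then ptraceA \<rho> b b' else 0) * v (a',b'))"
      using R1 R2 R3 by simp
    have T2: "S2 = (\<Sum>a\<in>UNIV. \<Sum>b\<in>UNIV. \<Sum>a'\<in>UNIV. \<Sum>b'\<in>UNIV. cnj (v (a,b)) * \<rho> (a,b) (a',b') * v (a',b'))"
      unfolding S2_def
      apply (rule trans[OF sum.swap])
      apply (rule sum.cong[OF refl])
      apply (subst rot3)
      apply (simp add: mult_ac)
      done
    show ?thesis unfolding T1 T2 qform_def sum_UNIV_prod idA_tensor_def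
      by (simp add: algebra_simps sum_subtractf)
  qed
  have E4: "S1 - S2 - S3 + S4 = 2 * (S1 - S2)" unfolding E1 E2 by (simp add: algebra_simps)
  show ?thesis unfolding E0 E4 by (simp only: E3)
qed

lemma reduction:
  fixes \<rho> :: "('a::finite \<times> 'b::finite) op"
  assumes "PPT \<rho>"
  shows "psd (\<lambda>i j. idA_tensor (ptraceA \<rho>) i j - \<rho> i j)"
  unfolding psd_def
proof
  fix v :: "'a \<times> 'b \<Rightarrow> complex"
  define f where "f \<equiv> \<lambda>(a::'a) (c::'a). (\<lambda>(x,y). if x = c then cnj (v (a,y)) else (0::complex))"
  define g where "g \<equiv> \<lambda>(a::'a) (c::'a). (\<lambda>(x,y). if x = a then cnj (v (c,y)) else (0::complex))"
  define Z where "Z = (\<Sum>a\<in>UNIV. \<Sum>c\<in>UNIV. qform (ptransB \<rho>) (\<lambda>i. f a c i - g a c i))"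
  have K: "Z = 2 * qform (\<lambda>i j. idA_tensor (ptraceA \<rho>) i j - \<rho> i j) v"
    unfolding Z_def f_def g_def by (rule key_identity)
  have P: "\<And>w. Im (qform (ptransB \<rho>) w) = 0 \<and> Re (qform (ptransB \<rho>) w) \<ge> 0"
    using assms unfolding PPT_def psd_def by blast
  have "Im Z = 0" unfolding Z_def by (simp add: Im_sum P)
  moreover have "Re Z \<ge> 0" unfolding Z_def by (simp add: Re_sum P sum_nonneg)
  ultimately show "Im (qform (\<lambda>i j. idA_tensor (ptraceA \<rho>) i j - \<rho> i j) v) = 0 \<and>
     Re (qform (\<lambda>i j. idA_tensor (ptraceA \<rho>) i j - \<rho> i j) v) \<ge> 0"
    using K by simp
qed

theorem mainTheorem16:
  fixes \<rho> :: "('a::finite \<times> 'b::finite) op"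
  assumes "density_op \<rho>" and "PPT \<rho>"
  shows "S_down_inf \<rho> \<ge> 0"
proof -
  define L where "L = {t::real. t \<ge> 0 \<and> loewner_le \<rho> (\<lambda>i j. complex_of_real t * idA_tensor (ptraceA \<rho>) i j)}"
  have "1 \<in> L" unfolding L_def loewner_le_def using reduction[OF assms(2)] by simp
  moreover have bdd: "bdd_below L" unfolding L_def by (rule bdd_belowI[of _ 0]) simp
  ultimately have le1: "Inf L \<le> 1" by (rule cInf_lower)
  have ne: "L \<noteq> {}" using \<open>1 \<in> L\<close> by blast
  have ge0: "Inf L \<ge> 0" by (rule cInf_greatest[OF ne]) (auto simp: L_def)
  have D: "D_max \<rho> (idA_tensor (ptraceA \<rho>)) \<le> 0"
  proof (cases "Inf L = 0")
    case True then show ?thesis unfolding D_max_def Let_def L_def[symmetric] using ne by simp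
  next
    case False
    then have "0 < Inf L" using ge0 by simp
    then have "log 2 (Inf L) \<le> 0" using le1 by simp
    then show ?thesis unfolding D_max_def Let_def L_def[symmetric] using ne False by simp
  qed
  then show ?thesis unfolding S_down_inf_def by simp
qed

end
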